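(* Let $p$ be an odd prime and $t$ a positive integer, and let $n$ be a positive integer dividing $p^t+1$ such that $\frac{p^t+1}{n}$ is odd. Let $\eta$ be a root of an irreducible quadratic polynomial over $\mathbb{F}_p$. Let $S\subseteq\mathbb{F}_p^n\times\mathbb{F}_p^n$ be a totally isotropic, simultaneously negacyclic subspace whose image under $(\mathbf{a},\mathbf{b})\mapsto\mathbf{a}+\eta\mathbf{b}$ is an ideal of $\mathbb{F}_p(\eta)[X]/\langle X^n+1\rangle$. Let $g(X)$ be the monic generator (dividing $X^n+1$) of the ideal $F=\{\mathbf{a}:(\mathbf{a},\mathbf{b})\in S\}$ of $\mathcal{R}=\mathbb{F}_p[X]/\langle X^n+1\rangle$. If $g(-X)=g(X)$, then $S$ is uniquely negacyclic.
   Context: Vectors $(a_0,\dots,a_{n-1})$ over a field are identified with polynomials $\sum a_iX^i$ modulo $X^n+1$. $N:\mathbb{F}_p^n\to\mathbb{F}_p^n$ is $(u_0,\dots,u_{n-1})\mapsto(-u_{n-1},u_0,\dots,u_{n-2})$; $S$ is simultaneously negacyclic if $(\mathbf{a},\mathbf{b})\in S$ implies $(N\mathbf{a},N\mathbf{b})\in S$. The symplectic inner product is $\langle(\mathbf{a},\mathbf{b}),(\mathbf{c},\mathbf{d})\rangle_s=\mathbf{a}^T\mathbf{d}-\mathbf{b}^T\mathbf{c}$ and $S$ is totally isotropic if it vanishes on $S\times S$. $S$ is uniquely negacyclic if there is a unique $f\in\mathcal{R}$ with $(g,f)\in S$. *)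

theory Defs
  imports "HOL-Computational_Algebra.Polynomial" "HOL-Library.Cardinality"
begin

text \<open>Vectors (a_0,...,a_{n-1}) over a field are represented as polynomials of degree < n.\<close>

definition vecs :: "nat \<Rightarrow> 'a::zero poly set" where
  "vecs n = {a. degree a < n}"

definition negmod :: "nat \<Rightarrow> 'a::comm_ring_1 poly" where
  "negmod n = monom 1 n + 1"

definition negashift :: "nat \<Rightarrow> 'a::comm_ring_1 poly \<Rightarrow> 'a poly" where
  "negashift n u = (\<Sum>i<n. monom (if i = 0 then - coeff u (n - 1) else coeff u (i - 1)) i)"

definition dotp :: "nat \<Rightarrow> 'a::comm_ring_1 poly \<Rightarrow> 'a poly \<Rightarrow> 'a" where
  "dotp n a b = (\<Sum>i<n. coeff a i * coeff b i)"

definition symp :: "nat \<Rightarrow> 'a::comm_ring_1 poly \<times> 'a poly \<Rightarrow> 'a poly \<times> 'a poly \<Rightarrow> 'a" where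
  "symp n u v = dotp n (fst u) (snd v) - dotp n (snd u) (fst v)"

definition is_subspace :: "nat \<Rightarrow> ('a::field poly \<times> 'a poly) set \<Rightarrow> bool" where
  "is_subspace n S \<longleftrightarrow> S \<subseteq> vecs n \<times> vecs n \<and> (0, 0) \<in> S \<and>
     (\<forall>u\<in>S. \<forall>v\<in>S. (fst u + fst v, snd u + snd v) \<in> S) \<and>
     (\<forall>c. \<forall>u\<in>S. (smult c (fst u), smult c (snd u)) \<in> S)"

definition simult_negacyclic :: "nat \<Rightarrow> ('a::comm_ring_1 poly \<times> 'a poly) set \<Rightarrow> bool" where
  "simult_negacyclic n S \<longleftrightarrow> (\<forall>a b. (a, b) \<in> S \<longrightarrow> (negashift n a, negashift n b) \<in> S)"

definition totally_isotropic :: "nat \<Rightarrow> ('a::comm_ring_1 poly \<times> 'a poly) set \<Rightarrow> bool" where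
  "totally_isotropic n S \<longleftrightarrow> (\<forall>u\<in>S. \<forall>v\<in>S. symp n u v = 0)"

text \<open>I (a set of representatives of degree < n) is an ideal of K[X]/<X^n+1>.\<close>
definition quot_ideal :: "nat \<Rightarrow> 'a::field poly set \<Rightarrow> bool" where
  "quot_ideal n I \<longleftrightarrow> I \<subseteq> vecs n \<and> 0 \<in> I \<and> (\<forall>x\<in>I. \<forall>y\<in>I. x + y \<in> I) \<and>
     (\<forall>r. \<forall>x\<in>I. (r * x) mod negmod n \<in> I)"

definition uniquely_negacyclic :: "nat \<Rightarrow> ('a::field poly \<times> 'a poly) set \<Rightarrow> 'a poly \<Rightarrow> bool" where
  "uniquely_negacyclic n S g \<longleftrightarrow> (\<exists>!f. f \<in> vecs n \<and> (g mod negmod n, f) \<in> S)"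

end

theory Submission
  imports Defs "HOL-Number_Theory.Cong" "HOL-Computational_Algebra.Primes"
begin


lemma card_power_same:
  fixes x :: "'a :: {field,finite}"
  shows "x ^ CARD('a) = x"
proof (cases "x = 0")
  case False
  have "x * (\<Prod>y\<in>UNIV-{0}. x * y) = x * x ^ (card (UNIV :: 'a set) - 1) * \<Prod>(UNIV-{0})"
    by (simp add: prod.distrib mult_ac)
  also have "x * x ^ (card (UNIV :: 'a set) - 1) = x ^ Suc (card (UNIV :: 'a set) - 1)"
    by (subst power_Suc) auto
  also have "Suc (card (UNIV :: 'a set) - 1) = card (UNIV :: 'a set)"
    using finite_UNIV_card_ge_0[where ?'a = 'a] by simp
  also have "(\<Prod>y\<in>UNIV-{0}. x * y) = (\<Prod>y\<in>UNIV-{0}. y)"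
    by (rule prod.reindex_bij_witness[of _ "\<lambda>y. y / x" "\<lambda>y. x * y"]) (use False in auto)
  finally show ?thesis
    by simp
qed (use finite_UNIV_card_ge_0[where ?'a = 'a] in auto)

lemma card_power_power_same:
  fixes x :: "'a :: {field,finite}"
  shows "x ^ (CARD('a) ^ k) = x"
  by (induction k) (simp_all add: card_power_same power_mult)

lemma of_nat_card_zero: "of_nat CARD('a) = (0 :: 'a :: {field,finite})"
proof -
  have "(\<Sum>x\<in>(UNIV::'a set). x) = (\<Sum>x\<in>UNIV. x + 1)"
    by (rule sum.reindex_bij_witness[of _ "\<lambda>y. y + 1" "\<lambda>y. y - 1"]) auto
  also have "\<dots> = (\<Sum>x\<in>UNIV. x) + of_nat CARD('a)"
    by (simp add: sum.distrib)
  finally show ?thesis by simp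
qed

lemma CHAR_card:
  assumes "prime (CARD('a :: {field,finite}))"
  shows "CHAR('a) = CARD('a)"
proof -
  have "CHAR('a) dvd CARD('a)" using of_nat_card_zero[where 'a='a] of_nat_eq_0_iff_char_dvd by blast
  moreover have "prime CHAR('a)" by (rule prime_CHAR_semidom) (rule finite_imp_CHAR_pos, simp)
  ultimately show ?thesis using assms by (metis prime_nat_iff not_prime_1)
qed

lemma pcompose_monom_gen: "pcompose (monom c k) q = smult c (q ^ k)"
  by (induction k) (simp_all add: monom_Suc pcompose_pCons monom_0)

lemma frobenius_poly:
  fixes a :: "'a :: {field,finite} poly"
  assumes "prime (CARD('a))"
  shows "a ^ (CARD('a) ^ k) = pcompose a (monom 1 (CARD('a) ^ k))"
proof (induction a)
  case 0
  then show ?case by simp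
next
  case (pCons c a)
  have ch: "prime CHAR('a poly)" "CARD('a) ^ k = CHAR('a poly) ^ k"
    using CHAR_card[OF assms] assms by simp_all
  have "pCons c a = [:c:] + monom 1 1 * a"
    by (simp add: poly_eq_iff coeff_monom_mult coeff_pCons split: nat.split)
  then have "pCons c a ^ (CARD('a) ^ k) = [:c:] ^ (CARD('a) ^ k) + (monom 1 1 * a) ^ (CARD('a) ^ k)"
    using freshmans_dream'[OF ch] by simp
  also have "[:c:] ^ (CARD('a) ^ k) = [:c:]"
    by (simp add: card_power_power_same poly_const_pow) 
  also have "(monom 1 1 * a) ^ (CARD('a) ^ k) = monom 1 (CARD('a) ^ k) * pcompose a (monom 1 (CARD('a) ^ k))"
    by (simp add: power_mult_distrib monom_power pCons.IH)
  finally show ?case by (simp add: pcompose_pCons)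
qed



lemma pcompose_cong_inner:
  fixes m :: "'a::field poly"
  assumes "[s1 = s2] (mod m)"
  shows "[pcompose a s1 = pcompose a s2] (mod m)"
proof (induction a)
  case 0 then show ?case by simp
next
  case (pCons c a)
  then show ?case by (simp add: pcompose_pCons cong_add cong_mult assms)
qed

lemma pcompose_cong_outer:
  fixes m :: "'a::field poly"
  assumes "m dvd pcompose m q" "[a = b] (mod m)"
  shows "[pcompose a q = pcompose b q] (mod m)"
proof -
  obtain w where "a - b = m * w" using assms(2) by (metis cong_iff_dvd_diff dvdE)
  then have "pcompose a q - pcompose b q = pcompose m q * pcompose w q"
    by (metis pcompose_diff pcompose_mult)
  then have "m dvd pcompose a q - pcompose b q" using assms(1) by simp
  then show ?thesis by (simp add: cong_iff_dvd_diff)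
qed

lemma Xn_cong: "[monom 1 n = -1] (mod (negmod n :: 'a::field poly))"
  by (simp add: cong_iff_dvd_diff negmod_def)

lemma negmod_pcompose_dvd:
  fixes q :: "'a::field poly"
  assumes "[q ^ n = -1] (mod negmod n)"
  shows "negmod n dvd pcompose (negmod n) q"
proof -
  have "pcompose (negmod n) q = q ^ n + 1"
    by (simp add: negmod_def pcompose_add pcompose_monom_gen pcompose_1)
  moreover have "[q ^ n + 1 = -1 + 1] (mod negmod n)" using assms by (rule cong_add) simp
  ultimately show ?thesis by (simp add: cong_0_iff)
qed

definition revn :: "nat \<Rightarrow> 'a::comm_ring_1 poly \<Rightarrow> 'a poly" where
  "revn n d = (\<Sum>j<n. monom (coeff d (n - 1 - j)) j)"

lemma coeff_sum_monoms: "coeff (\<Sum>j<n. monom (f j) j) k = (if k < n then f k else 0)"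
  by (simp add: coeff_sum coeff_monom)

lemma coeff_revn: "coeff (revn n d) k = (if k < n then coeff d (n - 1 - k) else 0)"
  unfolding revn_def by (rule coeff_sum_monoms)

lemma degree_revn: "n > 0 \<Longrightarrow> degree (revn n d) \<le> n - 1"
  by (rule degree_le) (auto simp: coeff_revn)

lemma dotp_revn:
  assumes "n > 0"
  shows "dotp n a d = coeff (a * revn n d) (n - 1)"
proof -
  have "coeff (a * revn n d) (n - 1) = (\<Sum>i\<le>n-1. coeff a i * coeff (revn n d) (n - 1 - i))"
    by (simp add: coeff_mult)
  also have "\<dots> = (\<Sum>i<n. coeff a i * coeff d i)"
    using assms by (intro sum.cong) (auto simp: coeff_revn)
  finally show ?thesis by (simp add: dotp_def)
qed

lemma coeff_mid_cong:
  fixes u v :: "'a::field poly"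
  assumes "n > 0" "degree u \<le> 2 * n - 2" "degree v \<le> 2 * n - 2" "[u = v] (mod negmod n)"
  shows "coeff u (n - 1) = coeff v (n - 1)"
proof -
  obtain w where w: "u - v = negmod n * w" using assms(4) by (metis cong_iff_dvd_diff dvdE)
  have "coeff w (n - 1) = 0"
  proof (cases "w = 0")
    case False
    have "degree (negmod n :: 'a poly) = n"
      using assms(1) by (simp add: negmod_def degree_add_eq_left degree_monom_eq)
    moreover have "negmod n \<noteq> (0::'a poly)" using assms(1) calculation by auto
    ultimately have "degree (u - v) = n + degree w" using False w by (simp add: degree_mult_eq)
    moreover have "degree (u - v) \<le> 2 * n - 2"
      using assms(2,3) degree_diff_le by blast
    ultimately have "degree w < n - 1" using assms(1) by linarith
    then show ?thesis by (simp add: coeff_eq_0)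
  qed simp
  then have "coeff (u - v) (n - 1) = 0" using assms(1)
    by (simp add: w negmod_def distrib_right coeff_monom_mult)
  then show ?thesis by simp
qed



locale emb =
  fixes \<iota> :: "'a::field \<Rightarrow> 'e::field"
  assumes add: "\<And>x y. \<iota> (x + y) = \<iota> x + \<iota> y" and mul: "\<And>x y. \<iota> (x * y) = \<iota> x * \<iota> y"
    and one: "\<iota> 1 = 1" and inj: "inj \<iota>"
begin

lemma zero[simp]: "\<iota> 0 = 0"
proof -
  have "\<iota> 0 + \<iota> 0 = \<iota> 0 + 0" using add[of 0 0] by simp
  then show ?thesis by (rule add_left_imp_eq)
qed

lemma uminus: "\<iota> (- x) = - \<iota> x"
proof -
  have "\<iota> x + \<iota> (-x) = 0" using add[of x "-x"] by simp
  then show ?thesis by (metis add.commute eq_neg_iff_add_eq_0)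
qed

lemma eq0_iff[simp]: "\<iota> x = 0 \<longleftrightarrow> x = 0"
  using inj zero by (metis injD)

lemma divide: "\<iota> (x / y) = \<iota> x / \<iota> y"
proof (cases "y = 0")
  case False
  have "\<iota> (x / y) * \<iota> y = \<iota> x" using False by (simp flip: mul)
  then show ?thesis using False by (simp add: eq_divide_eq)
qed simp

lemma poly_map: "poly (map_poly \<iota> q) (\<iota> r) = \<iota> (poly q r)"
  by (induction q) (simp_all add: map_poly_pCons add mul)

end

lemma no_root_deg2:
  fixes q :: "'a::field poly"
  assumes "irreducible q" "degree q = 2"
  shows "poly q r \<noteq> 0"
proof
  assume "poly q r = 0"
  then obtain k where k: "q = [:-r, 1:] * k" by (metis poly_eq_0_iff_dvd dvdE)
  have "q \<noteq> 0" using assms by auto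
  then have "k \<noteq> 0" using k by auto
  then have "degree q = degree [:-r, 1:] + degree k" using k by (metis degree_mult_eq pCons_eq_0_iff one_neq_zero)
  then have dk: "degree k = 1" using assms(2) by simp
  have "is_unit [:-r, 1:] \<or> is_unit k" using assms(1) k irreducibleD by blast
  then show False using dk \<open>k \<noteq> 0\<close> by (auto simp: is_unit_iff_degree)
qed

lemma (in emb) lin_indep:
  fixes q :: "'a poly"
  assumes "irreducible q" "degree q = 2" "poly (map_poly \<iota> q) \<eta> = 0"
    and "\<iota> x + \<eta> * \<iota> y = 0"
  shows "x = 0 \<and> y = 0"
proof (cases "y = 0")
  case True
  then show ?thesis using assms(4) by simp
next
  case False
  then have "\<eta> = \<iota> (- x / y)" using assms(4)
    by (simp add: divide uminus field_simps add_eq_0_iff)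
  then have "\<iota> (poly q (- x / y)) = 0" using assms(3) by (simp add: poly_map)
  then show ?thesis using no_root_deg2[OF assms(1,2)] by simp
qed



lemma (in emb) eta_step:
  fixes q :: "'a poly" and S :: "('a poly \<times> 'a poly) set"
  assumes irr: "irreducible q" and dq: "degree q = 2" and root: "poly (map_poly \<iota> q) \<eta> = 0"
    and sub: "is_subspace n S"
    and qi: "quot_ideal n ((\<lambda>(a, b). map_poly \<iota> a + smult \<eta> (map_poly \<iota> b)) ` S)"
    and n: "n > 0" and d: "(0, d) \<in> S"
  shows "\<exists>a b c. (a, b) \<in> S \<and> d = smult c a"
proof -
  let ?C = "(\<lambda>(a, b). map_poly \<iota> a + smult \<eta> (map_poly \<iota> b)) ` S"
  have dv: "degree d < n" using sub d by (auto simp: is_subspace_def vecs_def)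
  have "smult \<eta> (map_poly \<iota> d) \<in> ?C" using d by (force simp: image_iff)
  then have "([:\<eta>:] * smult \<eta> (map_poly \<iota> d)) mod negmod n \<in> ?C"
    using qi unfolding quot_ideal_def by blast
  moreover have "degree (smult (\<eta> * \<eta>) (map_poly \<iota> d)) < degree (negmod n :: 'e poly)"
  proof -
    have "degree (negmod n :: 'e poly) = n"
      using n by (simp add: negmod_def degree_add_eq_left degree_monom_eq)
    moreover have "degree (map_poly \<iota> d) = degree d" by (simp add: degree_map_poly)
    moreover have "degree (smult (\<eta> * \<eta>) (map_poly \<iota> d)) \<le> degree (map_poly \<iota> d)"
      by (rule degree_smult_le)
    ultimately show ?thesis using dv by linarith
  qed
  ultimately have "smult (\<eta> * \<eta>) (map_poly \<iota> d) \<in> ?C"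
    by (simp add: mod_poly_less)
  then obtain a b where ab: "(a, b) \<in> S"
    and eq: "map_poly \<iota> a + smult \<eta> (map_poly \<iota> b) = smult (\<eta> * \<eta>) (map_poly \<iota> d)"
    by auto
  define q0 where "q0 = coeff q 0"
  define q1 where "q1 = coeff q 1"
  define q2 where "q2 = coeff q 2"
  have "q \<noteq> 0" using dq by auto
  then have q2: "q2 \<noteq> 0" using dq unfolding q2_def by (metis leading_coeff_0_iff)
  have q0: "q0 \<noteq> 0" using no_root_deg2[OF irr dq, of 0] by (simp add: q0_def poly_0_coeff_0)
  have "poly (map_poly \<iota> q) \<eta> = (\<Sum>i\<le>degree (map_poly \<iota> q). coeff (map_poly \<iota> q) i * \<eta> ^ i)"
    by (rule poly_altdef)
  also have "degree (map_poly \<iota> q) = 2" using dq by (simp add: degree_map_poly)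
  finally have rel: "\<iota> q0 + \<iota> q1 * \<eta> + \<iota> q2 * (\<eta> * \<eta>) = 0"
    using root by (simp add: coeff_map_poly q0_def q1_def q2_def numeral_2_eq_2 atMost_Suc power2_eq_square algebra_simps)
  have coef: "coeff a i = (- q0 / q2) * coeff d i" for i
  proof -
    have ci: "\<iota> (coeff a i) + \<eta> * \<iota> (coeff b i) = \<eta> * \<eta> * \<iota> (coeff d i)"
      using arg_cong[OF eq, of "\<lambda>p. coeff p i"] by (simp add: coeff_map_poly)
    have "\<iota> (q2 * coeff a i + q0 * coeff d i) + \<eta> * \<iota> (q2 * coeff b i + q1 * coeff d i)
        = \<iota> q2 * (\<iota> (coeff a i) + \<eta> * \<iota> (coeff b i)) + \<iota> q0 * \<iota> (coeff d i) + \<eta> * \<iota> q1 * \<iota> (coeff d i)"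
      by (simp add: add mul algebra_simps)
    also have "\<dots> = \<iota> (coeff d i) * (\<iota> q0 + \<iota> q1 * \<eta> + \<iota> q2 * (\<eta> * \<eta>))"
      by (simp add: ci algebra_simps)
    also have "\<dots> = 0" using rel by simp
    finally have "q2 * coeff a i + q0 * coeff d i = 0"
      using lin_indep[OF irr dq root] by blast
    then show ?thesis using q2 by (simp add: field_simps add_eq_0_iff)
  qed
  have "d = smult (- q2 / q0) a"
    using q0 q2 by (intro poly_eqI) (simp add: coef field_simps)
  then show ?thesis using ab by blast
qed



lemma cong_smult:
  fixes a b :: "'a::field poly"
  assumes "[a = b] (mod m)"
  shows "[smult c a = smult c b] (mod m)"
proof -
  have "[[:c:] * a = [:c:] * b] (mod m)" using assms by (intro cong_mult cong_refl)
  then show ?thesis by simp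
qed

lemma K1:
  fixes g d :: "'a::field poly"
  assumes n: "n > 0" and dv: "degree d < n"
    and h: "\<And>k. k < n \<Longrightarrow> dotp n ((g * monom 1 k) mod negmod n) d = 0"
  shows "negmod n dvd g * revn n d"
proof -
  define M :: "'a poly" where "M = negmod n"
  have dM: "degree M = n" using n by (simp add: M_def negmod_def degree_add_eq_left degree_monom_eq)
  have M0: "M \<noteq> 0" using dM n by auto
  define c where "c = (g * revn n d) mod M"
  have dc: "degree c \<le> n - 1"
    using degree_mod_less[OF M0, of "g * revn n d"] dM n by (auto simp: c_def)
  have "coeff c j = 0" for j
  proof (cases "j < n")
    case True
    define k where "k = n - 1 - j"
    have k: "k < n" using n by (simp add: k_def)
    define a where "a = (g * monom 1 k) mod M"
    have da: "degree a \<le> n - 1"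
      using degree_mod_less[OF M0, of "g * monom 1 k"] dM n by (auto simp: a_def)
    have "0 = coeff (a * revn n d) (n - 1)"
      using h[OF k] unfolding dotp_revn[OF n] a_def M_def by simp
    also have "\<dots> = coeff (monom 1 k * c) (n - 1)"
    proof (rule coeff_mid_cong[OF n])
      show "degree (a * revn n d) \<le> 2 * n - 2"
        using degree_mult_le[of a "revn n d"] da degree_revn[OF n, of d] by linarith
      show "degree (monom 1 k * c) \<le> 2 * n - 2"
      proof -
        have "degree (monom 1 k * c) \<le> degree (monom (1::'a) k) + degree c" using degree_mult_le by blast
        also have "\<dots> \<le> k + (n - 1)" using dc degree_monom_le[of 1 k] by (rule add_mono[rotated])
        also have "\<dots> \<le> 2 * n - 2" using k by simp
        finally show ?thesis .
      qed
      have "[a * revn n d = (g * monom 1 k) * revn n d] (mod M)"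
        by (simp add: a_def cong_mult)
      moreover have "[monom 1 k * (g * revn n d) = monom 1 k * c] (mod M)"
        by (simp add: c_def cong_mult)
      ultimately show "[a * revn n d = monom 1 k * c] (mod negmod n)"
        unfolding M_def by (metis (no_types, lifting) cong_trans mult.assoc mult.commute)
    qed
    also have "\<dots> = coeff c j" using True k_def by (simp add: coeff_monom_mult)
    finally show ?thesis by simp
  next
    case False
    then show ?thesis using dc n by (simp add: coeff_eq_0)
  qed
  then have "c = 0" by (simp add: poly_eq_iff)
  then show ?thesis by (simp add: c_def M_def mod_eq_0_iff_dvd)
qed

lemma K2:
  fixes d s :: "'a::field poly"
  assumes n: "n > 0" and dv: "degree d < n" and xs: "[monom 1 1 * s = 1] (mod negmod n)"
  shows "[revn n d = monom 1 (n - 1) * pcompose d s] (mod negmod n)"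
proof -
  have dsum: "(\<Sum>i<n. monom (coeff d i) i) = d"
  proof -
    have "{..<n} = {..n - 1}" using n by auto
    then show ?thesis using poly_as_sum_of_monoms'[of d "n - 1"] dv by simp
  qed
  have "monom 1 (n - 1) * pcompose d s = (\<Sum>i<n. smult (coeff d i) (monom 1 (n - 1) * s ^ i))"
    by (subst dsum[symmetric]) (simp add: pcompose_sum pcompose_monom_gen sum_distrib_left)
  moreover have "[(\<Sum>i<n. smult (coeff d i) (monom 1 (n - 1) * s ^ i)) = (\<Sum>i<n. monom (coeff d i) (n - 1 - i))] (mod negmod n)"
  proof (rule cong_sum)
    fix i assume "i \<in> {..<n}"
    then have i: "i < n" by simp
    have "monom 1 (n - 1) * s ^ i = monom 1 (n - 1 - i) * (monom 1 1 * s) ^ i"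
      using i by (simp add: power_mult_distrib monom_power mult_monom flip: mult.assoc)
    moreover have "[monom 1 (n - 1 - i) * (monom 1 1 * s) ^ i = monom 1 (n - 1 - i) * 1 ^ i] (mod negmod n)"
      by (intro cong_mult cong_pow xs cong_refl)
    ultimately have "[monom 1 (n - 1) * s ^ i = monom 1 (n - 1 - i)] (mod negmod n)" by simp
    then have "[smult (coeff d i) (monom 1 (n - 1) * s ^ i) = smult (coeff d i) (monom 1 (n - 1 - i))] (mod negmod n)"
      by (rule cong_smult)
    then show "[smult (coeff d i) (monom 1 (n - 1) * s ^ i) = monom (coeff d i) (n - 1 - i)] (mod negmod n)"
      by (simp add: smult_monom)
  qed
  moreover have "(\<Sum>i<n. monom (coeff d i) (n - 1 - i)) = revn n d"
  proof -
    have "revn n d = (\<Sum>i<n. monom (coeff d (n - 1 - (n - Suc i))) (n - Suc i))"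
      unfolding revn_def by (rule sum.nat_diff_reindex[where g = "\<lambda>j. monom (coeff d (n - 1 - j)) j", symmetric])
    also have "\<dots> = (\<Sum>i<n. monom (coeff d i) (n - 1 - i))"
      by (intro sum.cong) auto
    finally show ?thesis by simp
  qed
  ultimately show ?thesis by (metis cong_sym)
qed



lemma arith_facts:
  fixes p t n :: nat
  assumes "odd p" "n dvd p ^ t + 1" "odd ((p ^ t + 1) div n)"
  shows "even n" "\<exists>m. odd m \<and> p ^ t + 1 = n * m"
proof -
  obtain m where m: "p ^ t + 1 = n * m" using assms(2) by blast
  have "n \<noteq> 0" using m by (metis mult_0 zero_eq_add_iff_both_eq_0 zero_neq_one)
  then have "m = (p ^ t + 1) div n" using m by simp
  then have "odd m" using assms(3) by simp
  then show "\<exists>m. odd m \<and> p ^ t + 1 = n * m" using m by blast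
  have "even (p ^ t + 1)" using assms(1) by simp
  then show "even n" using m \<open>odd m\<close> by (metis even_mult_iff)
qed

lemma X_facts:
  fixes N n m :: nat
  assumes "odd m" "N + 1 = n * m" "odd N" "even n"
  defines "M \<equiv> (negmod n :: 'a::field poly)"
  shows "[monom 1 (N + 1) = -1] (mod M)"
    and "[monom 1 1 * (- monom 1 N) = 1] (mod M)"
    and "[(- monom 1 N) ^ n = -1] (mod M)"
    and "[[:0, -1:] ^ n = -1] (mod M)"
    and "[monom 1 (N * N) = monom 1 1] (mod M)"
proof -
  have "monom (1::'a) (N + 1) = monom 1 n ^ m" by (simp add: monom_power flip: assms(2))
  moreover have "[monom (1::'a) n ^ m = (-1) ^ m] (mod M)" unfolding M_def by (intro cong_pow Xn_cong)
  ultimately show X1: "[monom 1 (N + 1) = -1] (mod M)" using assms(1) by simp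
  have "monom 1 1 * (- monom 1 N) = - monom (1::'a) (N + 1)" by (simp add: mult_monom)
  moreover have "[- monom (1::'a) (N + 1) = - (-1)] (mod M)" using X1 by (rule cong_uminus)
  ultimately show "[monom 1 1 * (- monom 1 N) = 1] (mod M)" by simp
  have "(- monom (1::'a) N) ^ n = monom 1 n ^ N" using assms(4) by (simp add: monom_power mult.commute)
  moreover have "[monom (1::'a) n ^ N = (-1) ^ N] (mod M)" unfolding M_def by (intro cong_pow Xn_cong)
  ultimately show "[(- monom 1 N) ^ n = -1] (mod M)" using assms(3) by simp
  have "[:0, -1::'a:] ^ n = monom 1 n" using assms(4)
  proof -
    have "[:0, -1::'a:] = - [:0, 1:]" by simp
    then have "[:0, -1::'a:] ^ n = [:0, 1:] ^ n" using assms(4) by (metis power_minus_even)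
    then show ?thesis by (simp add: monom_altdef)
  qed
  then show "[[:0, -1:] ^ n = -1] (mod M)" unfolding M_def using Xn_cong by simp
  obtain k where k: "N = Suc (2 * k)" using assms(3) oddE by (metis Suc_eq_plus1)
  have NN: "N * N = 1 + (N + 1) * (N - 1)" using k by (simp add: algebra_simps)
  have "monom (1::'a) (N * N) = monom 1 1 * monom 1 (N + 1) ^ (N - 1)"
    by (simp add: NN monom_power mult_monom)
  moreover have "[monom (1::'a) 1 * monom 1 (N + 1) ^ (N - 1) = monom 1 1 * (-1) ^ (N - 1)] (mod M)"
    by (intro cong_mult cong_pow X1 cong_refl)
  ultimately show "[monom 1 (N * N) = monom 1 1] (mod M)" using k by simp
qed



lemma kernel_zero:
  fixes g d u :: "'a::{field,finite} poly" and p t n :: nat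
  assumes pr: "prime p" and op: "odd p" and card: "CARD('a) = p"
    and tpos: "t > 0" and n: "n > 0" and ndvd: "n dvd p ^ t + 1" and oq: "odd ((p ^ t + 1) div n)"
    and gsym: "g \<circ>\<^sub>p [:0, -1:] = g"
    and du: "[d = u * g] (mod negmod n)" and dv: "degree d < n"
    and orth: "\<And>k. k < n \<Longrightarrow> dotp n ((g * monom 1 k) mod negmod n) d = 0"
  shows "d = 0"
proof -
  define N where "N = p ^ t"
  define M :: "'a poly" where "M = negmod n"
  define s :: "'a poly" where "s = - monom 1 N"
  have prc: "prime CARD('a)" using pr card by simp
  have en: "even n" using arith_facts(1)[OF op ndvd oq] .
  obtain m where m: "odd m" "N + 1 = n * m" using arith_facts(2)[OF op ndvd oq] N_def by blast
  have oN: "odd N" using op N_def by simp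
  note X = X_facts[OF m oN en, where 'a = 'a, folded M_def]
  have frobN: "a ^ N = pcompose a (monom 1 N)" for a :: "'a poly"
    using frobenius_poly[OF prc, of a t] card N_def by simp
  have frobNN: "a ^ (N * N) = pcompose a (monom 1 (N * N))" for a :: "'a poly"
    using frobenius_poly[OF prc, of a "t + t"] card N_def by (simp add: power_add)
  have s_comp: "s = pcompose [:0, -1:] (monom 1 N)" by (simp add: s_def pcompose_pCons)
  have comp_s: "pcompose a s = (pcompose a [:0, -1:]) ^ N" for a
    by (simp add: s_comp pcompose_assoc frobN)
  define r where "r = revn n d"
  have Mgr: "M dvd g * r" using K1[OF n dv orth] by (simp add: M_def r_def)
  have rcong: "[r = monom 1 (n - 1) * pcompose d s] (mod M)"
    using K2[OF n dv X(2)[unfolded M_def]] by (simp add: r_def M_def s_def)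
  have dscong: "[pcompose d s = pcompose (u * g) s] (mod M)"
    using pcompose_cong_outer[OF negmod_pcompose_dvd[OF X(3)[unfolded M_def, folded s_def]] du]
    by (simp add: M_def)
  define u' where "u' = pcompose u [:0, -1:]"
  have "pcompose (u * g) s = u' ^ N * g ^ N"
    by (simp add: pcompose_mult comp_s gsym u'_def power_mult_distrib)
  have c1: "[monom 1 (n - 1) * pcompose d s = monom 1 (n - 1) * (u' ^ N * g ^ N)] (mod M)"
    using cong_mult[OF cong_refl dscong] \<open>pcompose (u * g) s = u' ^ N * g ^ N\<close> by simp
  have c2: "[r = monom 1 (n - 1) * (u' ^ N * g ^ N)] (mod M)"
    using cong_trans[OF rcong c1] .
  have c3: "[g * r = g * (monom 1 (n - 1) * (u' ^ N * g ^ N))] (mod M)"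
    using cong_mult[OF cong_refl c2] .
  have c4: "[g * r = 0] (mod M)" using Mgr by (simp add: cong_0_iff)
  have c5: "[g * (monom 1 (n - 1) * (u' ^ N * g ^ N)) = 0] (mod M)"
    using cong_trans[OF cong_sym[OF c3] c4] .
  have c6: "[(g * (monom 1 (n - 1) * (u' ^ N * g ^ N))) * (u' * s ^ (n - 1)) = 0 * (u' * s ^ (n - 1))] (mod M)"
    using cong_mult[OF c5 cong_refl] .
  have e1: "(g * (monom 1 (n - 1) * (u' ^ N * g ^ N))) * (u' * s ^ (n - 1))
      = (g * u') ^ (N + 1) * (monom 1 1 * s) ^ (n - 1)"
  proof -
    have "(monom 1 1 * s) ^ (n - 1) = monom 1 (n - 1) * s ^ (n - 1)"
      by (simp add: power_mult_distrib monom_power)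
    moreover have "(g * u') ^ (N + 1) = (g * u') * (u' ^ N * g ^ N)"
      by (simp add: power_mult_distrib mult_ac)
    ultimately show ?thesis by (simp only: mult_ac)
  qed
  have c7: "[(g * u') ^ (N + 1) * (monom 1 1 * s) ^ (n - 1) = (g * u') ^ (N + 1) * 1 ^ (n - 1)] (mod M)"
    by (intro cong_mult cong_pow cong_refl) (use X(2) in \<open>simp add: s_def\<close>)
  have w1: "[(g * u') ^ (N + 1) = 0] (mod M)"
    using cong_trans[OF cong_sym[OF c7] c6[unfolded e1]] by simp
  define w where "w = g * u'"
  have "N + 1 \<le> N * N" using oN
  proof -
    have "p \<ge> 2" using pr by (simp add: prime_ge_2_nat)
    then have "p \<ge> 3" using op by presburger
    moreover have "p \<le> p ^ t" using tpos \<open>p \<ge> 2\<close> by (intro self_le_power) simp_all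
    ultimately have "N \<ge> 3" unfolding N_def by linarith
    moreover have "3 * N \<le> N * N" using \<open>N \<ge> 3\<close> by (rule mult_le_mono1)
    ultimately show ?thesis by linarith
  qed
  then have "w ^ (N * N) = w ^ (N + 1) * w ^ (N * N - (N + 1))"
    by (metis le_add_diff_inverse power_add)
  then have "[w ^ (N * N) = 0] (mod M)" using w1 unfolding w_def
    by (simp add: cong_0_iff)
  moreover have "[w ^ (N * N) = w] (mod M)"
  proof -
    have "[pcompose w (monom 1 (N * N)) = pcompose w (monom 1 1)] (mod M)"
      by (rule pcompose_cong_inner) (rule X(5))
    moreover have "monom 1 1 = [:0, 1::'a:]" by (simp add: monom_altdef)
    ultimately show ?thesis by (simp add: frobNN)
  qed
  ultimately have w0: "[w = 0] (mod M)" using cong_trans cong_sym by blast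
  have "[pcompose w [:0, -1:] = pcompose 0 [:0, -1:]] (mod M)"
    using pcompose_cong_outer[OF negmod_pcompose_dvd[OF X(4)[unfolded M_def]] w0[unfolded M_def]]
    by (simp add: M_def)
  moreover have "pcompose w [:0, -1:] = g * u"
  proof -
    have "pcompose [:0, -1:] [:0, -1::'a:] = [:0, 1:]" by (simp add: pcompose_pCons)
    then show ?thesis
      by (simp add: w_def u'_def pcompose_mult gsym flip: pcompose_assoc)
  qed
  ultimately have gu: "[u * g = 0] (mod M)" by (simp add: mult.commute)
  have "[d = 0] (mod M)" using cong_trans[OF du[folded M_def] gu] .
  then have "M dvd d" by (simp add: cong_0_iff)
  moreover have "degree M = n" using n by (simp add: M_def negmod_def degree_add_eq_left degree_monom_eq)
  ultimately show ?thesis using dv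
  proof -
    have "d mod M = d" using dv \<open>degree M = n\<close> by (intro mod_poly_less) simp
    moreover have "d mod M = 0" using \<open>M dvd d\<close> by (simp add: mod_eq_0_iff_dvd)
    ultimately show ?thesis by simp
  qed
qed



theorem mainTheorem7:
  fixes p t n :: nat
    and \<iota> :: "'a::{field,finite} \<Rightarrow> 'e::field"
    and q :: "'a poly" and \<eta> :: 'e
    and S :: "('a poly \<times> 'a poly) set"
    and g :: "'a poly"
  assumes "prime p" and "odd p" and "CARD('a) = p"
    and "t > 0" and "n > 0" and "n dvd p ^ t + 1" and "odd ((p ^ t + 1) div n)"
    \<comment> \<open>'e is the field F_p(eta): iota embeds F_p, eta is a root of an irreducible quadratic q\<close>
    and "\<And>x y. \<iota> (x + y) = \<iota> x + \<iota> y" and "\<And>x y. \<iota> (x * y) = \<iota> x * \<iota> y"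
    and "\<iota> 1 = 1" and "inj \<iota>"
    and "irreducible q" and "degree q = 2" and "poly (map_poly \<iota> q) \<eta> = 0"
    and "\<forall>z. \<exists>x y. z = \<iota> x + \<eta> * \<iota> y"
    and "is_subspace n S" and "totally_isotropic n S" and "simult_negacyclic n S"
    and "quot_ideal n ((\<lambda>(a, b). map_poly \<iota> a + smult \<eta> (map_poly \<iota> b)) ` S)"
    and "lead_coeff g = 1" and "g dvd negmod n"
    and "{a. \<exists>b. (a, b) \<in> S} = {f mod negmod n | f. g dvd f}"
    and "g \<circ>\<^sub>p [:0, -1:] = g"
  shows "uniquely_negacyclic n S g"
proof -
  interpret emb \<iota> by (rule emb.intro) (fact assms(8), fact assms(9), fact assms(10), fact assms(11))
  define M :: "'a poly" where "M = negmod n"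
  have sub: "is_subspace n S" by fact
  have Fset: "\<And>f. g dvd f \<Longrightarrow> \<exists>b. (f mod M, b) \<in> S"
  proof -
    fix f assume "g dvd f"
    then have "f mod M \<in> {f mod negmod n | f. g dvd f}" unfolding M_def by blast
    then have "f mod M \<in> {a. \<exists>b. (a, b) \<in> S}" by (simp only: assms(22))
    then show "\<exists>b. (f mod M, b) \<in> S" by simp
  qed
  have Fset2: "\<And>a b. (a, b) \<in> S \<Longrightarrow> \<exists>f. a = f mod M \<and> g dvd f"
  proof -
    fix a b assume "(a, b) \<in> S"
    then have "a \<in> {a. \<exists>b. (a, b) \<in> S}" by blast
    then have "a \<in> {f mod negmod n | f. g dvd f}" by (simp only: assms(22))
    then show "\<exists>f. a = f mod M \<and> g dvd f" unfolding M_def by blast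
  qed
  have kernel: "d = 0" if d: "(0, d) \<in> S" for d
  proof -
    obtain a b c where ab: "(a, b) \<in> S" and dac: "d = smult c a"
      using eta_step[OF assms(12,13,14) sub assms(19) assms(5) d] by blast
    obtain f where f: "a = f mod M" "g dvd f" using Fset2[OF ab] by blast
    obtain v where v: "f = g * v" using f(2) by blast
    have "d = (smult c f) mod M" using dac f(1) by (simp add: mod_smult_left)
    then have "[d = smult c f] (mod M)" by simp
    then have du: "[d = smult c v * g] (mod negmod n)" using v M_def by (simp add: mult.commute)
    have dv: "degree d < n" using sub d by (auto simp: is_subspace_def vecs_def)
    have orth: "dotp n ((g * monom 1 k) mod negmod n) d = 0" for k
    proof -
      obtain b' where b': "((g * monom 1 k) mod M, b') \<in> S" using Fset[of "g * monom 1 k"] by auto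
      have "symp n ((g * monom 1 k) mod M, b') (0, d) = 0"
        using assms(17) b' d unfolding totally_isotropic_def by blast
      then show ?thesis by (simp add: symp_def dotp_def M_def)
    qed
    show "d = 0"
      by (rule kernel_zero[OF assms(1,2,3,4,5,6,7,23) du dv orth])
  qed
  have ex: "\<exists>b. (g mod M, b) \<in> S" using Fset[of g] by simp
  then obtain b where b: "(g mod M, b) \<in> S" by blast
  have bv: "b \<in> vecs n" using sub b by (auto simp: is_subspace_def)
  have uniq: "f1 = f2" if "(g mod M, f1) \<in> S" "(g mod M, f2) \<in> S" for f1 f2
  proof -
    have addS: "\<And>u v. u \<in> S \<Longrightarrow> v \<in> S \<Longrightarrow> (fst u + fst v, snd u + snd v) \<in> S"
      using sub unfolding is_subspace_def by blast
    have smS: "\<And>c u. u \<in> S \<Longrightarrow> (smult c (fst u), smult c (snd u)) \<in> S"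
      using sub unfolding is_subspace_def by blast
    have "(smult (-1) (g mod M), smult (-1) f2) \<in> S"
      using smS[OF that(2), of "-1"] by simp
    then have "((g mod M) + smult (-1) (g mod M), f1 + smult (-1) f2) \<in> S"
      using addS[OF that(1)] by fastforce
    then have "(0, f1 - f2) \<in> S" by simp
    then show ?thesis using kernel by (metis eq_iff_diff_eq_0)
  qed
  show ?thesis unfolding uniquely_negacyclic_def
  proof (rule ex1I[of _ b])
    show "b \<in> vecs n \<and> (g mod negmod n, b) \<in> S" using b bv by (simp add: M_def)
    fix y assume "y \<in> vecs n \<and> (g mod negmod n, y) \<in> S"
    then show "y = b" using uniq[of y b] b by (simp add: M_def)
  qed
qed

end
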